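(* Let $K=[x_1,x_2]\times[y_1,y_2]\in T_h$ with vertices $P_1=(x_1,y_1)$, $P_2=(x_2,y_1)$, $P_3=(x_2,y_2)$, $P_4=(x_1,y_2)$, and $h_x=x_2-x_1$, $h_y=y_2-y_1$. For $w,v\in U_h$ (restricted to $K$, so that $w_{xy}$ is constant on $K$), we have $$\int_{P_1P_4}(\Pi_h^*v-v)w_x\,dy=\frac{h_y^3}{24}v_y(x_1,y)w_{xy},\qquad \int_{P_1P_4}(\Pi_h^*v-v)w_y\,dy=0,$$ $$\int_{P_2P_3}(\Pi_h^*v-v)w_x\,dy=\frac{h_y^3}{24}v_y(x_2,y)w_{xy},\qquad \int_{P_2P_3}(\Pi_h^*v-v)w_y\,dy=0,$$ $$\int_{P_1P_2}(\Pi_h^*v-v)w_y\,dx=\frac{h_x^3}{24}v_x(x,y_1)w_{xy},\qquad \int_{P_1P_2}(\Pi_h^*v-v)w_x\,dx=0,$$ $$\int_{P_4P_3}(\Pi_h^*v-v)w_y\,dx=\frac{h_x^3}{24}v_x(x,y_2)w_{xy},\qquad \int_{P_4P_3}(\Pi_h^*v-v)w_x\,dx=0,$$ where the derivatives of $w,v$ are those of their restrictions to $K$ (note $v_y(x_1,y)$ is independent of $y$ and $v_x(x,y_1)$ is independent of $x$).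
   Context: $\Omega\subset\mathbb{R}^2$ is an open rectangle, $T_h$ a conforming partition of $\overline\Omega$ into closed rectangles with sides parallel to the axes, $N_h$ its set of nodes. The dual partition $T_h^*$ is obtained by connecting the center of each element to the midpoints of its edges; the control volume $K_P^*$ of a node $P$ is the union of the resulting sub-rectangles having $P$ as a vertex. $U_h=\{v\in C^0(\overline\Omega): v|_K\in Q_1(K)\ \forall K,\ v|_{\partial\Omega}=0\}$ ($Q_1$ = bilinear polynomials). $\Pi_h^*v=\sum_{P\in N_h}v(P)\chi_P$, $\chi_P$ the characteristic function of $K_P^*$; thus on an edge of $K$, $\Pi_h^*v$ equals the value of $v$ at the nearer endpoint. *)

theory Defs
  imports "HOL-Analysis.Analysis"
begin

text \<open>A bilinear (Q1) polynomial in two variables, as a function on the whole plane.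
  A function in U_h restricted to the element K coincides on K with such a polynomial;
  its derivatives "of the restriction to K" are those of this polynomial.\<close>
definition Q1_poly :: "(real \<Rightarrow> real \<Rightarrow> real) \<Rightarrow> bool" where
  "Q1_poly f \<longleftrightarrow> (\<exists>a b c d. f = (\<lambda>x y. a + b * x + c * y + d * x * y))"

definition pdx :: "(real \<Rightarrow> real \<Rightarrow> real) \<Rightarrow> real \<Rightarrow> real \<Rightarrow> real" where
  "pdx f x y = deriv (\<lambda>t. f t y) x"

definition pdy :: "(real \<Rightarrow> real \<Rightarrow> real) \<Rightarrow> real \<Rightarrow> real \<Rightarrow> real" where
  "pdy f x y = deriv (\<lambda>t. f x t) y"

text \<open>The dual interpolant restricted to K = [x1,x2] x [y1,y2]: the control volume of a
  vertex P meets K in the quarter sub-rectangle of K at P (cut at the midpoints), so on K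
  the value of Pi_h^* v is v at the vertex of the quarter containing the point
  (values on the mid-lines, a null set, are assigned to the lower/left vertex).\<close>
definition pistar_K :: "real \<Rightarrow> real \<Rightarrow> real \<Rightarrow> real \<Rightarrow> (real \<Rightarrow> real \<Rightarrow> real) \<Rightarrow> real \<Rightarrow> real \<Rightarrow> real" where
  "pistar_K x1 x2 y1 y2 v x y =
     v (if x \<le> (x1 + x2) / 2 then x1 else x2) (if y \<le> (y1 + y2) / 2 then y1 else y2)"

end

theory Submission
  imports Defs
begin

lemma piece_int:
  fixes a c :: real
  assumes "a \<le> c"
  shows "((\<lambda>t. be*(p-t)*(B+D*t)) has_integral
     (be*(p*B*c + (p*D - B)*c^2/2 - D*c^3/3)) - (be*(p*B*a + (p*D - B)*a^2/2 - D*a^3/3))) {a..c}"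
proof (rule fundamental_theorem_of_calculus[OF assms])
  fix x assume "x \<in> {a..c}"
  show "((\<lambda>t. be*(p*B*t + (p*D - B)*t^2/2 - D*t^3/3)) has_vector_derivative be*(p-x)*(B+D*x)) (at x within {a..c})"
    unfolding has_real_derivative_iff_has_vector_derivative[symmetric]
    apply (rule derivative_eq_intros refl | simp)+
    apply (simp add: field_simps power2_eq_square)
    done
qed

lemma edge_int:
  fixes a b :: real
  assumes "a < b"
    and f: "\<And>t. f t = (if t \<le> (a+b)/2 then be*(a-t)*(B+D*t) else be*(b-t)*(B+D*t))"
  shows "integral {a..b} f = (b-a)^3/24 * be * D"
proof -
  define m where "m = (a+b)/2"
  have am: "a \<le> m" "m \<le> b" using assms(1) by (auto simp: m_def)
  have i1: "(f has_integral (be*(a*B*m + (a*D - B)*m^2/2 - D*m^3/3)) - (be*(a*B*a + (a*D - B)*a^2/2 - D*a^3/3))) {a..m}"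
    apply (rule has_integral_spike_finite[OF _ _ piece_int[OF am(1)], where S="{}"])
    by (auto simp: f m_def)
  have i2: "(f has_integral (be*(b*B*b + (b*D - B)*b^2/2 - D*b^3/3)) - (be*(b*B*m + (b*D - B)*m^2/2 - D*m^3/3))) {m..b}"
    apply (rule has_integral_spike_finite[OF _ _ piece_int[OF am(2)], where S="{m}"])
    by (auto simp: f m_def)
  have "(f has_integral ((be*(a*B*m + (a*D - B)*m^2/2 - D*m^3/3)) - (be*(a*B*a + (a*D - B)*a^2/2 - D*a^3/3)))
     + ((be*(b*B*b + (b*D - B)*b^2/2 - D*b^3/3)) - (be*(b*B*m + (b*D - B)*m^2/2 - D*m^3/3)))) {a..b}"
    by (rule has_integral_combine[OF am i1 i2])
  then have "integral {a..b} f = ((be*(a*B*m + (a*D - B)*m^2/2 - D*m^3/3)) - (be*(a*B*a + (a*D - B)*a^2/2 - D*a^3/3)))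
     + ((be*(b*B*b + (b*D - B)*b^2/2 - D*b^3/3)) - (be*(b*B*m + (b*D - B)*m^2/2 - D*m^3/3)))"
    by (rule integral_unique)
  also have "\<dots> = (b-a)^3/24 * be * D"
    unfolding m_def by (simp add: field_simps power2_eq_square power3_eq_cube)
  finally show ?thesis .
qed

lemma derivs:
  fixes a b c d :: real
  shows "pdx (\<lambda>x y. a + b * x + c * y + d * x * y) = (\<lambda>x y. b + d*y)"
    and "pdy (\<lambda>x y. a + b * x + c * y + d * x * y) = (\<lambda>x y. c + d*x)"
proof -
  show "pdx (\<lambda>x y. a + b * x + c * y + d * x * y) = (\<lambda>x y. b + d*y)"
    unfolding pdx_def
    by (intro ext DERIV_imp_deriv) (auto intro!: derivative_eq_intros)
  show "pdy (\<lambda>x y. a + b * x + c * y + d * x * y) = (\<lambda>x y. c + d*x)"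
    unfolding pdy_def
    by (intro ext DERIV_imp_deriv) (auto intro!: derivative_eq_intros)
qed

lemma derivs2:
  fixes a b :: real
  shows "pdy (\<lambda>x y. b + d*y) = (\<lambda>x y. d)"
    unfolding pdy_def
    by (intro ext DERIV_imp_deriv) (auto intro!: derivative_eq_intros)

theorem lemma3p2:
  fixes x1 x2 y1 y2 :: real and v w :: "real \<Rightarrow> real \<Rightarrow> real"
  assumes "x1 < x2" and "y1 < y2"
    and "Q1_poly v" and "Q1_poly w"
  defines "hx \<equiv> x2 - x1" and "hy \<equiv> y2 - y1"
    and "Pv \<equiv> pistar_K x1 x2 y1 y2 v"
  shows
    "(\<forall>y\<in>{y1..y2}. integral {y1..y2} (\<lambda>t. (Pv x1 t - v x1 t) * pdx w x1 t)
        = hy ^ 3 / 24 * pdy v x1 y * pdy (pdx w) x1 y)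
   \<and> integral {y1..y2} (\<lambda>t. (Pv x1 t - v x1 t) * pdy w x1 t) = 0
   \<and> (\<forall>y\<in>{y1..y2}. integral {y1..y2} (\<lambda>t. (Pv x2 t - v x2 t) * pdx w x2 t)
        = hy ^ 3 / 24 * pdy v x2 y * pdy (pdx w) x2 y)
   \<and> integral {y1..y2} (\<lambda>t. (Pv x2 t - v x2 t) * pdy w x2 t) = 0
   \<and> (\<forall>x\<in>{x1..x2}. integral {x1..x2} (\<lambda>s. (Pv s y1 - v s y1) * pdy w s y1)
        = hx ^ 3 / 24 * pdx v x y1 * pdy (pdx w) x y1)
   \<and> integral {x1..x2} (\<lambda>s. (Pv s y1 - v s y1) * pdx w s y1) = 0
   \<and> (\<forall>x\<in>{x1..x2}. integral {x1..x2} (\<lambda>s. (Pv s y2 - v s y2) * pdy w s y2)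
        = hx ^ 3 / 24 * pdx v x y2 * pdy (pdx w) x y2)
   \<and> integral {x1..x2} (\<lambda>s. (Pv s y2 - v s y2) * pdx w s y2) = 0"
proof -
  obtain a b c d where v: "v = (\<lambda>x y. a + b * x + c * y + d * x * y)"
    using assms(3) unfolding Q1_poly_def by blast
  obtain A B C D where w: "w = (\<lambda>x y. A + B * x + C * y + D * x * y)"
    using assms(4) unfolding Q1_poly_def by blast
  have dw: "pdx w = (\<lambda>x y. B + D*y)" "pdy w = (\<lambda>x y. C + D*x)"
    unfolding w by (rule derivs)+
  have dv: "pdx v = (\<lambda>x y. b + d*y)" "pdy v = (\<lambda>x y. c + d*x)"
    unfolding v by (rule derivs)+
  have x1m: "x1 \<le> (x1+x2)/2" and x2m: "\<not> x2 \<le> (x1+x2)/2" using assms(1) by auto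
  note E = edge_int[OF assms(2)] edge_int[OF assms(1)]
  have 1: "integral {y1..y2} (\<lambda>t. (Pv x1 t - v x1 t) * pdx w x1 t) = hy^3/24 * (c+d*x1) * D"
    unfolding hy_def
    by (rule E(1)[where be="c+d*x1" and B="B" and D="D"]) (use assms(1,2) in \<open>simp add: Pv_def pistar_K_def dw v algebra_simps\<close>)
  have 2: "integral {y1..y2} (\<lambda>t. (Pv x1 t - v x1 t) * pdy w x1 t) = hy^3/24 * (c+d*x1) * 0"
    unfolding hy_def
    by (rule E(1)[where be="c+d*x1" and B="C+D*x1" and D="0"]) (use assms(1,2) in \<open>simp add: Pv_def pistar_K_def dw v algebra_simps\<close>)
  have 3: "integral {y1..y2} (\<lambda>t. (Pv x2 t - v x2 t) * pdx w x2 t) = hy^3/24 * (c+d*x2) * D"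
    unfolding hy_def
    by (rule E(1)[where be="c+d*x2" and B="B" and D="D"]) (use assms(1,2) in \<open>simp add: Pv_def pistar_K_def dw v algebra_simps\<close>)
  have 4: "integral {y1..y2} (\<lambda>t. (Pv x2 t - v x2 t) * pdy w x2 t) = hy^3/24 * (c+d*x2) * 0"
    unfolding hy_def
    by (rule E(1)[where be="c+d*x2" and B="C+D*x2" and D="0"]) (use assms(1,2) in \<open>simp add: Pv_def pistar_K_def dw v algebra_simps\<close>)
  have y1m: "y1 \<le> (y1+y2)/2" and y2m: "\<not> y2 \<le> (y1+y2)/2" using assms(2) by auto
  have 5: "integral {x1..x2} (\<lambda>s. (Pv s y1 - v s y1) * pdy w s y1) = hx^3/24 * (b+d*y1) * D"
    unfolding hx_def
    by (rule E(2)[where be="b+d*y1" and B="C" and D="D"]) (use assms(1,2) in \<open>simp add: Pv_def pistar_K_def dw v algebra_simps\<close>)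
  have 6: "integral {x1..x2} (\<lambda>s. (Pv s y1 - v s y1) * pdx w s y1) = hx^3/24 * (b+d*y1) * 0"
    unfolding hx_def
    by (rule E(2)[where be="b+d*y1" and B="B+D*y1" and D="0"]) (use assms(1,2) in \<open>simp add: Pv_def pistar_K_def dw v algebra_simps\<close>)
  have 7: "integral {x1..x2} (\<lambda>s. (Pv s y2 - v s y2) * pdy w s y2) = hx^3/24 * (b+d*y2) * D"
    unfolding hx_def
    by (rule E(2)[where be="b+d*y2" and B="C" and D="D"]) (use assms(1,2) in \<open>simp add: Pv_def pistar_K_def dw v algebra_simps\<close>)
  have 8: "integral {x1..x2} (\<lambda>s. (Pv s y2 - v s y2) * pdx w s y2) = hx^3/24 * (b+d*y2) * 0"
    unfolding hx_def
    by (rule E(2)[where be="b+d*y2" and B="B+D*y2" and D="0"]) (use assms(1,2) in \<open>simp add: Pv_def pistar_K_def dw v algebra_simps\<close>)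
  show ?thesis
    using 1 2 3 4 5 6 7 8 by (simp add: dv dw derivs2)
qed

end
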